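(* Let $q=2^m$ with $m$ a positive integer, let $b\in\mathbb{F}_q^*$ and $\delta\in\mathbb{F}_{q^2}\setminus\mathbb{F}_q$. Put $$A=b\,\mathrm{Tr}_{q^2/q}(\delta)^2,\quad B=b\delta^{6q}+b\delta^6,\quad C=\mathrm{Tr}_{q^2/q}(\delta)^2,\quad D=A^{-1},$$ and define $S_{-1}=0$, $S_0=1$, $S_i=C^{2^{i-1}}S_{i-1}+D^{2^{i-1}}S_{i-2}$ for $i\geq1$. If the polynomial $$P(x)=b(x^q+x+\delta)^{6}+x$$ permutes $\mathbb{F}_{q^2}$, then its compositional inverse over $\mathbb{F}_{q^2}$ is $$P^{-1}(x)=x+b\left(\delta+\sum_{i=0}^{m-1}\left(D^{2^i}S_{m-2-i}^{2^{i+1}}+D^{1-2^{i}}S_i\right)\left(x^q+x+B\right)^{2^i}\right)^{6}.$$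
   Context: $\mathrm{Tr}_{q^2/q}(y)=y+y^q$. The compositional inverse of a permutation polynomial $f$ of $\mathbb{F}_{Q}$ is the unique polynomial $f^{-1}$ (modulo $x^Q-x$) with $f(f^{-1}(c))=f^{-1}(f(c))=c$ for all $c\in\mathbb{F}_Q$. *)

theory Defs
  imports Main
begin

definition tr :: "nat \<Rightarrow> 'a::field \<Rightarrow> 'a" where
  "tr q y = y + y ^ q"

text \<open>Shifted sequence: Sseq k = S_{k-1}, so Sseq 0 = S_{-1} = 0, Sseq 1 = S_0 = 1,
  and S_i = C^(2^(i-1)) S_{i-1} + D^(2^(i-1)) S_{i-2} for i >= 1.\<close>
fun Sseq :: "'a::field \<Rightarrow> 'a \<Rightarrow> nat \<Rightarrow> 'a" where
  "Sseq C D 0 = 0"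
| "Sseq C D (Suc 0) = 1"
| "Sseq C D (Suc (Suc n)) = C ^ (2 ^ n) * Sseq C D (Suc n) + D ^ (2 ^ n) * Sseq C D n"

definition S :: "'a::field \<Rightarrow> 'a \<Rightarrow> int \<Rightarrow> 'a" where
  "S C D i = Sseq C D (nat (i + 1))"

end

theory Submission
  imports Defs "HOL-Computational_Algebra.Polynomial"
begin


lemma c2_bit0: assumes "(2::'a::field) = 0" shows "(numeral (Num.Bit0 n) :: 'a) = 0"
  by (metis assms mult_zero_left numeral_Bit0 one_add_one distrib_right mult_1 mult_2)
lemma c2_bit1: assumes "(2::'a::field) = 0" shows "(numeral (Num.Bit1 n) :: 'a) = 1"
proof -
  have "(numeral (Num.Bit1 n) :: 'a) = numeral (Num.Bit0 n) + 1"
    by (simp only: numeral_Bit1 numeral_Bit0)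
  then show ?thesis using c2_bit0[OF assms, of n] by simp
qed
lemma c2_neg: assumes "(2::'a::field) = 0" shows "- (x::'a) = x"
  by (metis add.inverse_unique assms mult_2 mult_zero_left)

lemmas c2simps = c2_bit0 c2_bit1 c2_neg

lemma pow2_sq: "((x::'a::comm_monoid_mult)^(2^n))^2 = x^(2^(Suc n))"
  by (simp add: power_mult[symmetric] mult.commute)
lemma pow2_pow2: "((x::'a::comm_monoid_mult)^(2^n))^(2^k) = x^(2^(n+k))"
  by (simp add: power_mult[symmetric] power_add)

lemma frob2: assumes c: "(2::'a::field) = 0" shows "((x::'a) + y)^2 = x^2 + y^2"
  by (simp add: power2_eq_square algebra_simps c2simps[OF c])

lemma frob: assumes c: "(2::'a::field) = 0" shows "((x::'a) + y)^(2^k) = x^(2^k) + y^(2^k)"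
proof (induction k)
  case 0 then show ?case by simp
next
  case (Suc k)
  have "(x + y)^(2^Suc k) = ((x+y)^(2^k))^2" by (simp add: pow2_sq)
  also have "\<dots> = (x^(2^k))^2 + (y^(2^k))^2" using Suc frob2[OF c] by simp
  finally show ?case by (simp add: pow2_sq)
qed

lemma frob_sum: assumes c: "(2::'a::field) = 0"
  shows "(\<Sum>i\<in>I. (f i :: 'a))^(2^k) = (\<Sum>i\<in>I. f i ^ (2^k))"
proof (cases "finite I")
  case True then show ?thesis
    by (induction I rule: finite_induct) (auto simp: frob[OF c])
next
  case False then show ?thesis by simp
qed

definition fr :: "nat \<Rightarrow> 'a::comm_monoid_mult \<Rightarrow> 'a" where "fr k x = x^(2^k)"

lemma fr_0[simp]: "fr 0 x = x" by (simp add: fr_def)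
lemma fr_sq[simp]: "(fr k x)^2 = fr (Suc k) x" by (simp add: fr_def pow2_sq)
lemma fr_Suc: "fr (Suc k) x = (fr k x)^2" by simp
lemma fr_Suc0: "fr (Suc 0) x = x^2" by (simp add: fr_def)
lemma fr_Suc': "fr (Suc k) x = fr k (x^2)" by (simp add: fr_def power_mult[symmetric] mult.commute)
lemma fr_mult[simp]: "fr k (x*y) = fr k x * fr k y" by (simp add: fr_def power_mult_distrib)
lemma fr_fr[simp]: "fr j (fr k x) = fr (k+j) x" by (simp add: fr_def pow2_pow2)
lemma fr_one[simp]: "fr k 1 = 1" by (simp add: fr_def)
lemma fr_zero[simp]: "fr k (0::'a::field) = 0" by (simp add: fr_def power_0_left)
lemma fr_add: "(2::'a::field) = 0 \<Longrightarrow> fr k (x+y) = fr k x + fr k (y::'a)"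
  by (simp add: fr_def frob)
lemma fr_sum: "(2::'a::field) = 0 \<Longrightarrow> fr k (\<Sum>i\<in>I. (f i::'a)) = (\<Sum>i\<in>I. fr k (f i))"
  by (simp add: fr_def frob_sum)

lemma Sseq_step2: "k = n+2 \<Longrightarrow> j = n+1 \<Longrightarrow> Sseq C D k = fr n C * Sseq C D j + fr n D * Sseq C D n"
  by (simp add: numeral_2_eq_2 fr_def)

declare Sseq.simps(3)[simp del]

lemma S_left:
  fixes C D :: "'a::field"
  assumes c: "(2::'a::field) = 0"
  shows "Sseq C D (n+2) = C * Sseq C D (n+1) ^ 2 + D^2 * Sseq C D n ^ 4
       \<and> Sseq C D (n+3) = C * Sseq C D (n+2) ^ 2 + D^2 * Sseq C D (n+1) ^ 4"
proof (induction n)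
  case 0
  have "Sseq C D 3 = C^2 * C + D^2" by (simp add: numeral_3_eq_3 numeral_2_eq_2 Sseq.simps)
  then show ?case by (simp add: numeral_2_eq_2 power2_eq_square power4_eq_xxxx algebra_simps Sseq.simps)
next
  case (Suc n)
  let ?s = "Sseq C D"
  have st3: "?s (n+3) = fr (n+1) C * ?s (n+2) + fr (n+1) D * ?s (n+1)"
    by (rule Sseq_step2) simp_all
  have st2: "?s (n+2) = fr n C * ?s (n+1) + fr n D * ?s n"
    by (rule Sseq_step2) simp_all
  have st4: "?s (n+4) = fr (n+2) C * ?s (n+3) + fr (n+2) D * ?s (n+2)"
    by (rule Sseq_step2) simp_all
  have e1: "?s (n+3) ^ 2 = fr (n+2) C * ?s (n+2) ^ 2 + fr (n+2) D * ?s (n+1) ^ 2"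
  proof -
    have "?s (n+3) ^ 2 = (fr (n+1) C * ?s (n+2))^2 + (fr (n+1) D * ?s (n+1))^2"
      unfolding st3 by (rule frob2[OF c])
    then show ?thesis by (simp add: power_mult_distrib)
  qed
  have e2': "?s (n+2) ^ 2 = fr (n+1) C * ?s (n+1) ^ 2 + fr (n+1) D * ?s n ^ 2"
  proof -
    have "?s (n+2) ^ 2 = (fr n C * ?s (n+1))^2 + (fr n D * ?s n)^2"
      unfolding st2 by (rule frob2[OF c])
    then show ?thesis by (simp add: power_mult_distrib)
  qed
  have e2: "?s (n+2) ^ 4 = fr (n+2) C * ?s (n+1) ^ 4 + fr (n+2) D * ?s n ^ 4"
  proof -
    have p4: "\<And>x::'a. x^4 = (x^2)^2" by (simp add: power_mult[symmetric])
    have "?s (n+2) ^ 4 = (fr (n+1) C * ?s (n+1) ^ 2 + fr (n+1) D * ?s n ^ 2)^2"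
      unfolding p4 e2' ..
    also have "\<dots> = (fr (n+1) C * ?s (n+1) ^ 2)^2 + (fr (n+1) D * ?s n ^ 2)^2"
      by (rule frob2[OF c])
    finally show ?thesis by (simp add: power_mult_distrib power_mult[symmetric])
  qed
  have key: "\<And>a b e f x y z w. a = C*x + D^2*y \<Longrightarrow> b = C*z + D^2*w \<Longrightarrow>
      e*a + f*b = C*(e*x + f*z) + D^2*(e*y + f*w)" by (simp add: algebra_simps)
  have "?s (n+4) = C * (fr (n+2) C * ?s (n+2) ^ 2 + fr (n+2) D * ?s (n+1) ^ 2)
        + D^2 * (fr (n+2) C * ?s (n+1) ^ 4 + fr (n+2) D * ?s n ^ 4)"
    unfolding st4 by (rule key) (use Suc in blast)+
  also have "\<dots> = C * ?s (n+3) ^ 2 + D^2 * ?s (n+2) ^ 4" by (simp only: e1 e2)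
  finally have "?s (n+4) = C * ?s (n+3) ^ 2 + D^2 * ?s (n+2) ^ 4" .
  moreover have "?s (n+3) = C * ?s (n+2) ^ 2 + D^2 * ?s (n+1) ^ 4" using Suc by blast
  moreover have ns: "Suc n + 2 = n + 3" "Suc n + 1 = n + 2" "Suc n + 3 = n + 4" by simp_all
  ultimately show ?case unfolding ns unfolding Suc_eq_plus1 by blast
qed


lemma V_alg:
  fixes a d s0 s1 s2 cc x0 x1 x2 X D :: "'a::field"
  assumes c: "(2::'a) = 0" and ad: "a*d = 1" and s2: "s2 = cc*s1 + d*s0"
  shows "X + D*a*(s1*x0 + s0*x1) + D*a^2*s1*(x2 + cc*x1 + d*x0) = X + D*a^2*(s2*x1 + s1*x2)"
proof -
  have "X + D*a*(s1*x0 + s0*x1) + D*a^2*s1*(x2 + cc*x1 + d*x0)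
      = X + D*a^2*(s2*x1 + s1*x2) + (a*d + 1)*(D*a*(s1*x0+s0*x1))"
    unfolding s2 by (simp add: algebra_simps c2simps[OF c] power2_eq_square)
  also have "a*d + 1 = 0" using ad c by simp
  finally show ?thesis by simp
qed

lemma Vsum:
  fixes A C D :: "'a::field" and x :: "nat \<Rightarrow> 'a"
  assumes c: "(2::'a) = 0" and AD: "A * D = 1"
  shows "(\<Sum>i<n. D * fr (i+1) A * Sseq C D (i+1) * (x(i+2) + fr i C * x(i+1) + fr i D * x i))
     = x 0 + D * fr n A * (Sseq C D (n+1) * x n + Sseq C D n * x(n+1))"
proof (induction n)
  case 0
  have "x 0 + D * A * x 0 = 0" using AD c by (simp add: algebra_simps c2simps[OF c] flip: mult_2)
  then show ?case by simp
next
  case (Suc n)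
  have ad: "fr n A * fr n D = 1" using AD by (metis fr_mult fr_one)
  have s2: "Sseq C D (n+2) = fr n C * Sseq C D (n+1) + fr n D * Sseq C D n"
    by (rule Sseq_step2) simp_all
  have "(\<Sum>i<Suc n. D * fr (i+1) A * Sseq C D (i+1) * (x(i+2) + fr i C * x(i+1) + fr i D * x i))
     = x 0 + D * fr n A * (Sseq C D (n+1) * x n + Sseq C D n * x(n+1))
       + D * (fr n A)^2 * Sseq C D (n+1) * (x(n+2) + fr n C * x(n+1) + fr n D * x n)"
    using Suc by simp
  also have "\<dots> = x 0 + D * (fr n A)^2 * (Sseq C D (n+2) * x (n+1) + Sseq C D (n+1) * x(n+2))"
    by (rule V_alg[OF c ad s2])
  finally show ?case by (simp add: add.assoc)
qed

lemma U_alg: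
  fixes Z xn x1 x2 d U1 U0 F cc d2 :: "'a::field"
  assumes c: "(2::'a) = 0" and F: "F = cc*U1 + d2*U0"
  shows "Z + xn*d*U1 + x1*F + U1*(x2 + cc*x1 + d*xn) = Z + x1*d2*U0 + x2*U1"
  unfolding F by (simp add: algebra_simps c2simps[OF c])

lemma Usum:
  fixes C D :: "'a::field" and x :: "nat \<Rightarrow> 'a"
  assumes c: "(2::'a) = 0"
  shows "n + 1 \<le> m \<Longrightarrow> (\<Sum>i<n. fr (i+1) (Sseq C D (m-1-i)) * (x(i+2) + fr i C * x(i+1) + fr i D * x i))
     = x 0 * D * Sseq C D (m-1) ^ 2 + x 1 * Sseq C D m
       + x n * fr n D * fr (n+1) (Sseq C D (m-1-n)) + x (n+1) * fr n (Sseq C D (m-n))"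
proof (induction n)
  case 0
  show ?case by (simp add: algebra_simps c2simps[OF c] fr_Suc0 flip: mult_2)
next
  case (Suc n)
  define j where "j = m - (n+2)"
  have mj: "m = n + 2 + j" using Suc.prems unfolding j_def by simp
  let ?s = "Sseq C D"
  have L: "?s (j+2) = C * ?s (j+1) ^ 2 + D^2 * ?s j ^ 4" using S_left[OF c] by blast
  have p4: "\<And>y::'a. y^4 = fr 2 y" by (simp add: fr_def)
  have p2: "\<And>y::'a. y^2 = fr 1 y" by (simp add: fr_def)
  have F: "fr n (?s (j+2)) = fr n C * fr (n+1) (?s (j+1)) + fr (n+1) D * fr (n+2) (?s j)"
    unfolding L fr_add[OF c] fr_mult p4 p2 fr_fr by (simp add: add.commute)
  have i1: "m-1-n = j+1" "m-n = j+2" "m-1-(Suc n) = j" "m - Suc n = j+1" using mj by auto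
  have "(\<Sum>i<Suc n. fr (i+1) (?s (m-1-i)) * (x(i+2) + fr i C * x(i+1) + fr i D * x i))
     = (x 0 * D * ?s (m-1) ^ 2 + x 1 * ?s m)
       + x n * fr n D * fr (n+1) (?s (j+1)) + x (n+1) * fr n (?s (j+2))
       + fr (n+1) (?s (j+1)) * (x(n+2) + fr n C * x(n+1) + fr n D * x n)"
    using Suc i1 by (simp add: add.assoc)
  also have "\<dots> = (x 0 * D * ?s (m-1) ^ 2 + x 1 * ?s m) + x (n+1) * fr (n+1) D * fr (n+2) (?s j)
       + x (n+2) * fr (n+1) (?s (j+1))"
    by (rule U_alg[OF c F])
  finally show ?case using i1 by (simp add: add.assoc)
qed



lemma main_sum:
  fixes A C D :: "'a::field" and x :: "nat \<Rightarrow> 'a"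
  assumes c: "(2::'a) = 0" and AD: "A * D = 1" and Am: "fr m A = A" and m: "m \<ge> 1"
    and xm: "x m = x 0" and xm1: "x (m+1) = x 1"
  shows "(\<Sum>i<m. (fr (i+1) (Sseq C D (m-1-i)) + D * fr (i+1) A * Sseq C D (i+1))
            * (x(i+2) + fr i C * x(i+1) + fr i D * x i))
         = (Sseq C D (m+1) + D * Sseq C D (m-1) ^ 2) * x 0"
proof -
  obtain k where mk: "m = Suc k" using m by (cases m) auto
  let ?y = "\<lambda>i. x(i+2) + fr i C * x(i+1) + fr i D * x i"
  have V: "(\<Sum>i<m. D * fr (i+1) A * Sseq C D (i+1) * ?y i)
     = x 0 + D * A * (Sseq C D (m+1) * x 0 + Sseq C D m * x 1)"
    using Vsum[OF c AD, where n=m and x=x and C=C] Am xm xm1 by simp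
  have U0: "(\<Sum>i<k. fr (i+1) (Sseq C D (m-1-i)) * ?y i)
     = x 0 * D * Sseq C D (m-1) ^ 2 + x 1 * Sseq C D m
       + x k * fr k D * fr (k+1) (Sseq C D (m-1-k)) + x (k+1) * fr k (Sseq C D (m-k))"
    by (rule Usum[OF c]) (simp add: mk)
  have U: "(\<Sum>i<m. fr (i+1) (Sseq C D (m-1-i)) * ?y i)
     = x 0 * D * Sseq C D (m-1) ^ 2 + x 1 * Sseq C D m + x 0"
    using U0 xm by (simp add: mk)
  have "(\<Sum>i<m. (fr (i+1) (Sseq C D (m-1-i)) + D * fr (i+1) A * Sseq C D (i+1)) * ?y i)
      = (\<Sum>i<m. fr (i+1) (Sseq C D (m-1-i)) * ?y i) + (\<Sum>i<m. D * fr (i+1) A * Sseq C D (i+1) * ?y i)"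
    by (simp add: sum.distrib algebra_simps)
  also have "\<dots> = (Sseq C D (m+1) + D * Sseq C D (m-1) ^ 2) * x 0 + (x 0 + x 0) + (x 1 * Sseq C D m + x 1 * Sseq C D m)"
    unfolding U V using AD by (simp add: algebra_simps)
  also have "x 0 + x 0 = 0" using c by (metis mult_2 mult_zero_left)
  also have "x 1 * Sseq C D m + x 1 * Sseq C D m = 0" using c by (metis mult_2 mult_zero_left)
  finally show ?thesis by simp
qed


fun sol :: "'a::field \<Rightarrow> 'a \<Rightarrow> 'a \<Rightarrow> 'a \<Rightarrow> nat \<Rightarrow> 'a" where
  "sol C D a b 0 = a"
| "sol C D a b (Suc 0) = b"
| "sol C D a b (Suc (Suc n)) = fr n C * sol C D a b (Suc n) + fr n D * sol C D a b n"

lemma sol_S: "sol C D 0 1 n = Sseq C D n"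
  by (induction C D n rule: Sseq.induct) (simp_all add: Sseq.simps fr_def)

lemma sol_lin: "sol C D a b n = a * sol C D 1 0 n + b * sol C D 0 1 n"
  by (induction C D a b n rule: sol.induct) (simp_all add: algebra_simps)

lemma sol_sq:
  fixes A C D :: "'a::field"
  assumes c: "(2::'a) = 0" and AD: "A * D = 1"
  shows "(sol C D a b n)^2 = sol C D (A*(b^2 + C*a^2)) (a^2) (Suc n)"
proof -
  let ?a = "A*(b^2 + C*a^2)"
  have "(sol C D a b n)^2 = sol C D ?a (a^2) (Suc n) \<and> (sol C D a b (Suc n))^2 = sol C D ?a (a^2) (Suc (Suc n))"
  proof (induction n)
    case 0
    have "b^2 = C * a^2 + D * (A * (b^2 + C * a^2))"
    proof -
      have "D * (A * (b^2 + C * a^2)) = b^2 + C*a^2" using AD by (metis mult.assoc mult.commute mult_1)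
      then show ?thesis by (simp add: algebra_simps c2simps[OF c] flip: mult_2)
    qed
    then show ?case by simp
  next
    case (Suc n)
    have "(sol C D a b (Suc (Suc n)))^2 = (fr n C * sol C D a b (Suc n))^2 + (fr n D * sol C D a b n)^2"
      by (simp only: sol.simps frob2[OF c])
    also have "\<dots> = fr (Suc n) C * sol C D ?a (a^2) (Suc (Suc n)) + fr (Suc n) D * sol C D ?a (a^2) (Suc n)"
      using Suc by (simp add: power_mult_distrib)
    also have "\<dots> = sol C D ?a (a^2) (Suc (Suc (Suc n)))" by simp
    finally show ?case using Suc by simp
  qed
  then show ?thesis by blast
qed

lemma funpow_Suc_apply: "(f ^^ Suc j) x = f ((f ^^ j) x)" by simp

definition rho :: "'a::field \<Rightarrow> 'a \<Rightarrow> 'a \<times> 'a \<Rightarrow> 'a \<times> 'a" where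
  "rho A C v = (A*((snd v)^2 + C*(fst v)^2), (fst v)^2)"

lemma sol_iter:
  fixes A C D :: "'a::field"
  assumes c: "(2::'a) = 0" and AD: "A * D = 1"
  shows "fr j (sol C D a b n) = sol C D (fst ((rho A C ^^ j) (a,b))) (snd ((rho A C ^^ j) (a,b))) (n + j)"
proof (induction j arbitrary: n)
  case 0 then show ?case by simp
next
  case (Suc j)
  have "fr (Suc j) (sol C D a b n) = (fr j (sol C D a b n))^2" by simp
  also have "\<dots> = (sol C D (fst ((rho A C ^^ j) (a,b))) (snd ((rho A C ^^ j) (a,b))) (n + j))^2"
    using Suc by simp
  also have "\<dots> = sol C D (fst ((rho A C ^^ Suc j) (a,b))) (snd ((rho A C ^^ Suc j) (a,b))) (Suc (n + j))"
    unfolding sol_sq[OF c AD] by (simp add: rho_def)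
  finally show ?case by simp
qed

lemma casorati:
  fixes C D :: "'a::field"
  assumes c: "(2::'a) = 0"
  shows "D * (sol C D 1 0 n * sol C D 0 1 (Suc n) + sol C D 0 1 n * sol C D 1 0 (Suc n)) = fr n D"
proof (induction n)
  case 0 then show ?case by simp
next
  case (Suc n)
  let ?r = "sol C D 1 0" and ?s = "sol C D 0 1"
  have h: "?r (Suc n) * ?s (Suc (Suc n)) + ?s (Suc n) * ?r (Suc (Suc n))
       = fr n D * (?r n * ?s (Suc n) + ?s n * ?r (Suc n))"
    by (simp add: algebra_simps c2simps[OF c])
  have "D * (?r (Suc n) * ?s (Suc (Suc n)) + ?s (Suc n) * ?r (Suc (Suc n)))
      = fr n D * (D * (?r n * ?s (Suc n) + ?s n * ?r (Suc n)))" unfolding h by (simp only: mult_ac)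
  also have "D * (?r n * ?s (Suc n) + ?s n * ?r (Suc n)) = fr n D" using Suc.IH .
  finally show ?case by (simp only: fr_Suc power2_eq_square)
qed

lemma r_formula:
  fixes A C D :: "'a::field"
  assumes c: "(2::'a) = 0" and AD: "A * D = 1"
  shows "sol C D 1 0 (Suc n) = D * (sol C D 0 1 n)^2"
proof -
  have "(sol C D 0 1 n)^2 = sol C D A 0 (Suc n)" using sol_sq[OF c AD, of C 0 1 n] by simp
  also have "\<dots> = A * sol C D 1 0 (Suc n)" by (subst sol_lin) simp
  finally show ?thesis using AD by (simp add: algebra_simps)
qed


lemma poly_avoid:
  fixes \<alpha> :: "nat \<Rightarrow> 'a::field"
  assumes a0: "\<alpha> 0 \<noteq> 0" and m: "m \<ge> 1" and K: "finite K" and cK: "2^m \<le> card K"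
  shows "\<exists>c\<in>K. (\<Sum>j<m. fr j c * \<alpha> j) \<noteq> 0"
proof (rule ccontr)
  assume H: "\<not> ?thesis"
  define p where "p = (\<Sum>j<m. monom (\<alpha> j) (2^j))"
  have pe: "poly p c = (\<Sum>j<m. fr j c * \<alpha> j)" for c
    unfolding p_def poly_sum poly_monom fr_def by (simp add: mult.commute)
  have "coeff p 1 = (\<Sum>j<m. if 2^j = (1::nat) then \<alpha> j else 0)"
    unfolding p_def coeff_sum coeff_monom by simp
  also have "\<dots> = (\<Sum>j\<in>{0}. \<alpha> j)"
    by (rule sum.mono_neutral_cong_right) (use m in auto)
  finally have "coeff p 1 = \<alpha> 0" by simp
  then have p0: "p \<noteq> 0" using a0 by auto
  have "degree p \<le> 2^(m-1)"
    unfolding p_def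
  proof (rule degree_sum_le)
    fix j assume "j \<in> {..<m}"
    then have "(2::nat)^j \<le> 2^(m-1)" by (intro power_increasing) auto
    then show "degree (monom (\<alpha> j) (2^j)) \<le> 2^(m-1)" using degree_monom_le order_trans by blast
  qed simp
  moreover have "K \<subseteq> {x. poly p x = 0}" using H pe by auto
  then have "card K \<le> card {x. poly p x = 0}" by (intro card_mono poly_roots_finite p0)
  moreover have "card {x. poly p x = 0} \<le> degree p" by (rule card_poly_roots_bound[OF p0])
  moreover have "(2::nat)^(m-1) < 2^m" using m by simp
  ultimately show False using cK by linarith
qed

lemma fr_comm: "fr m (fr n x) = fr n (fr m x)" by (simp add: add.commute)

lemma sol_Fq:
  fixes C D :: "'a::field"
  assumes c: "(2::'a) = 0" and Cm: "fr m C = C" and Dm: "fr m D = D" and am: "fr m a = a" and bm: "fr m b = b"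
  shows "fr m (sol C D a b n) = sol C D a b n"
proof -
  have "fr m (sol C D a b n) = sol C D a b n \<and> fr m (sol C D a b (Suc n)) = sol C D a b (Suc n)"
  proof (induction n)
    case 0 then show ?case using am bm by simp
  next
    case (Suc n)
    have "fr m (sol C D a b (Suc (Suc n))) = fr n (fr m C) * fr m (sol C D a b (Suc n)) + fr n (fr m D) * fr m (sol C D a b n)"
      by (simp add: fr_add[OF c] add.commute)
    then show ?case using Suc Cm Dm by simp
  qed
  then show ?thesis by blast
qed

lemma tau_idem:
  fixes A C D :: "'a::field"
  assumes c: "(2::'a) = 0" and AD: "A * D = 1" and Cm: "fr m C = C" and Dm: "fr m D = D"
  shows "(sol C D 1 0 m + sol C D 0 1 (Suc m))^2 = sol C D 1 0 m + sol C D 0 1 (Suc m)"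
proof -
  let ?r = "sol C D 1 0" and ?s = "sol C D 0 1"
  have e1: "(?r m)^2 = A*C * ?r (Suc m) + ?s (Suc m)"
    using sol_sq[OF c AD, of C 1 0 m] sol_lin[of C D "A*C" 1 "Suc m"] by simp
  have e2: "(?s (Suc m))^2 = A * ?r (Suc (Suc m))"
    using sol_sq[OF c AD, of C 0 1 "Suc m"] sol_lin[of C D A 0 "Suc (Suc m)"] by simp
  have e3: "?r (Suc (Suc m)) = C * ?r (Suc m) + D * ?r m" using Cm Dm by simp
  have "(?r m + ?s (Suc m))^2 = A*C * ?r (Suc m) + ?s (Suc m) + A * (C * ?r (Suc m) + D * ?r m)"
    unfolding frob2[OF c] e1 e2 e3 ..
  also have "\<dots> = ?s (Suc m) + (A*D) * ?r m" by (simp add: algebra_simps c2simps[OF c])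
  finally show ?thesis using AD by simp
qed

lemma inj2:
  fixes r s r' s' a b a' b' :: "'a::field"
  assumes c: "(2::'a) = 0" and det: "r*s' + s*r' = 1"
    and E1: "a*r + b*s = a'*r + b'*s" and E2: "a*r' + b*s' = a'*r' + b'*s'"
  shows "a = a' \<and> b = b'"
proof -
  have E1': "(a-a')*r + (b-b')*s = 0" using E1 by (simp add: algebra_simps)
  have E2': "(a-a')*r' + (b-b')*s' = 0" using E2 by (simp add: algebra_simps)
  have "(a-a') = (a-a')*(r*s' + s*r')" using det by simp
  also have "\<dots> = s'*((a-a')*r + (b-b')*s) + s*((a-a')*r' + (b-b')*s') - 2*((b-b')*s*s')"
    by (simp add: algebra_simps)
  finally have ha: "a - a' = s'*((a-a')*r + (b-b')*s) + s*((a-a')*r' + (b-b')*s') - 2*((b-b')*s*s')" .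
  have "(b-b') = (b-b')*(r*s' + s*r')" using det by simp
  also have "\<dots> = r*((a-a')*r' + (b-b')*s') + r'*((a-a')*r + (b-b')*s) - 2*((a-a')*r*r')"
    by (simp add: algebra_simps)
  finally have hb: "b - b' = r*((a-a')*r' + (b-b')*s') + r'*((a-a')*r + (b-b')*s) - 2*((a-a')*r*r')" .
  have "a - a' = 0" using ha by (simp only: E1' E2' c mult_zero_right mult_zero_left diff_zero add_0)
  moreover have "b - b' = 0" using hb by (simp only: E1' E2' c mult_zero_right mult_zero_left diff_zero add_0)
  ultimately show ?thesis by simp
qed


lemma tau_ne0:
  fixes A C D :: "'a::{field,finite}"
  assumes c: "(2::'a) = 0" and AD: "A * D = 1" and Cm: "fr m C = C" and Dm: "fr m D = D"
    and Am: "fr m A = A" and m: "m \<ge> 1"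
    and cardK: "2^m \<le> card {x::'a. fr m x = x}"
    and inj: "\<And>t. fr m t = t \<Longrightarrow> A*t^4 + A*C*t^2 + t = 0 \<Longrightarrow> t = 0"
  shows "sol C D 1 0 m + sol C D 0 1 (Suc m) \<noteq> 0"
proof
  assume tau0: "sol C D 1 0 m + sol C D 0 1 (Suc m) = 0"
  let ?r = "sol C D 1 0" and ?s = "sol C D 0 1"
  have D0: "D \<noteq> 0" using AD by auto
  have det: "?r m * ?s (Suc m) + ?s m * ?r (Suc m) = 1"
    using casorati[OF c, where C=C and D=D and n=m] Dm D0 by simp
  have rm: "?r m = ?s (Suc m)" using tau0 c2_neg[OF c] by (metis add_eq_0_iff2)
  define w where "w = (if ?s m \<noteq> 0 \<or> ?r m + 1 \<noteq> 0 then (?s m, ?r m + 1) else (0, 1::'a))"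
  have wnz: "w \<noteq> (0,0)" unfolding w_def by auto
  have Phiw: "sol C D (fst w) (snd w) m = fst w \<and> sol C D (fst w) (snd w) (Suc m) = snd w"
  proof (cases "?s m \<noteq> 0 \<or> ?r m + 1 \<noteq> 0")
    case True
    then have w: "w = (?s m, ?r m + 1)" unfolding w_def by simp
    have "sol C D (?s m) (?r m + 1) m = ?s m * ?r m + (?r m + 1) * ?s m" by (subst sol_lin) simp
    also have "\<dots> = ?s m" by (simp add: algebra_simps c2simps[OF c])
    finally have 1: "sol C D (?s m) (?r m + 1) m = ?s m" .
    have "sol C D (?s m) (?r m + 1) (Suc m) = ?s m * ?r (Suc m) + (?r m + 1) * ?s (Suc m)" by (subst sol_lin) simp
    also have "\<dots> = (?r m * ?s (Suc m) + ?s m * ?r (Suc m)) + ?s (Suc m)" by (simp add: algebra_simps)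
    also have "\<dots> = ?r m + 1" using det rm by simp
    finally show ?thesis using 1 w by simp
  next
    case False
    then have w: "w = (0, 1)" unfolding w_def by simp
    have "?r m = 1" using False c2_neg[OF c] by (metis add_eq_0_iff2 )
    then show ?thesis using w False rm by simp
  qed
  have wFq: "fr m (fst w) = fst w" "fr m (snd w) = snd w"
    unfolding w_def using sol_Fq[OF c Cm Dm, of 1 0] sol_Fq[OF c Cm Dm, of 0 1] by (auto simp: fr_add[OF c])
  define v where "v = (rho A C ^^ m) w"
  have "fr m (sol C D (fst w) (snd w) 0) = sol C D (fst v) (snd v) (0 + m)"
    unfolding v_def using sol_iter[OF c AD, of m C "fst w" "snd w" 0] by simp
  then have v1: "sol C D (fst v) (snd v) m = fst w" using wFq by simp
  have "fr m (sol C D (fst w) (snd w) 1) = sol C D (fst v) (snd v) (1 + m)"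
    unfolding v_def using sol_iter[OF c AD, of m C "fst w" "snd w" 1] by simp
  then have v2: "sol C D (fst v) (snd v) (Suc m) = snd w" using wFq by simp
  have "fst v = fst w \<and> snd v = snd w"
  proof (rule inj2[OF c det])
    show "fst v * ?r m + snd v * ?s m = fst w * ?r m + snd w * ?s m"
      using v1 Phiw sol_lin[of C D "fst v" "snd v" m] sol_lin[of C D "fst w" "snd w" m] by simp
    show "fst v * ?r (Suc m) + snd v * ?s (Suc m) = fst w * ?r (Suc m) + snd w * ?s (Suc m)"
      using v2 Phiw sol_lin[of C D "fst v" "snd v" "Suc m"] sol_lin[of C D "fst w" "snd w" "Suc m"] by simp
  qed
  then have vw: "(rho A C ^^ m) w = w" unfolding v_def by (simp add: prod_eq_iff)
  define p where "p j = fst ((rho A C ^^ j) w)" for j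
  define rr where "rr j = snd ((rho A C ^^ j) w)" for j
  have pS: "p (Suc j) = A*((rr j)^2 + C*(p j)^2)" for j unfolding p_def rr_def by (simp add: rho_def)
  have rS: "rr (Suc j) = (p j)^2" for j unfolding p_def rr_def by (simp add: rho_def)
  have pm: "p m = p 0" and rrm: "rr m = rr 0" unfolding p_def rr_def using vw by simp_all
  have pFq: "fr m (p j) = p j \<and> fr m (rr j) = rr j" for j
  proof (induction j)
    case 0 then show ?case using wFq unfolding p_def rr_def by simp
  next
    case (Suc j)
    have h: "fr m (x^2) = (fr m x)^2" for x :: 'a by (simp add: fr_def power_mult[symmetric] mult.commute)
    show ?case using Suc unfolding pS rS by (simp add: fr_add[OF c] Am Cm h del: fr_sq)
  qed
  have N: "(\<Sum>j<m. fr j c * p j) = 0 \<and> (\<Sum>j<m. fr j c * rr j) = 0" if cF: "fr m c = c" for c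
  proof -
    define N1 where "N1 = (\<Sum>j<m. fr j c * p j)"
    define N2 where "N2 = (\<Sum>j<m. fr j c * rr j)"
    have shift: "(\<Sum>j<m. g (Suc j)) = (\<Sum>j<m. g j)" if "g m = g 0" for g :: "nat \<Rightarrow> 'a"
    proof -
      have "(\<Sum>j<Suc m. g j) = g 0 + (\<Sum>j<m. g (Suc j))" by (rule sum.lessThan_Suc_shift)
      moreover have "(\<Sum>j<Suc m. g j) = (\<Sum>j<m. g j) + g m" by simp
      ultimately show ?thesis using that by (simp add: add.commute)
    qed
    have sq1: "N1^2 = (\<Sum>j<m. fr (Suc j) c * (p j)^2)"
      unfolding N1_def fr_Suc0[symmetric] fr_sum[OF c] by (simp add: fr_Suc0)
    have sq2: "N2^2 = (\<Sum>j<m. fr (Suc j) c * (rr j)^2)"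
      unfolding N2_def fr_Suc0[symmetric] fr_sum[OF c] by (simp add: fr_Suc0)
    have "N1^2 = (\<Sum>j<m. fr (Suc j) c * rr (Suc j))" unfolding sq1 rS ..
    also have "\<dots> = N2" unfolding N2_def by (rule shift) (simp add: cF rrm)
    finally have e2: "N2 = N1^2" by simp
    have "A*(N2^2 + C*N1^2) = (\<Sum>j<m. fr (Suc j) c * (A*((rr j)^2 + C*(p j)^2)))"
      unfolding sq1 sq2 by (simp add: sum_distrib_left sum.distrib algebra_simps)
    also have "\<dots> = (\<Sum>j<m. fr (Suc j) c * p (Suc j))" unfolding pS ..
    also have "\<dots> = N1" unfolding N1_def by (rule shift) (simp add: cF pm)
    finally have e1: "N1 = A*(N1^4 + C*N1^2)" using e2 by (simp add: power_mult[symmetric])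
    have hc: "fr (x+m) c = fr x c" for x by (metis fr_fr cF add.commute)
    have N1F: "fr m N1 = N1" unfolding N1_def fr_sum[OF c]
      by (intro sum.cong refl) (simp add: hc pFq)
    have "A*N1^4 + A*C*N1^2 + N1 = N1 + N1" using e1 by (simp add: algebra_simps)
    also have "\<dots> = 0" using c by (metis mult_2 mult_zero_left)
    finally have "N1 = 0" using inj[OF N1F] by blast
    then show ?thesis using e2 unfolding N1_def N2_def by simp
  qed
  have finK: "finite {x::'a. fr m x = x}" by simp
  show False
  proof (cases "p 0 \<noteq> 0")
    case True
    obtain c where "c \<in> {x. fr m x = x}" "(\<Sum>j<m. fr j c * p j) \<noteq> 0"
      using poly_avoid[where \<alpha>=p, OF True m finK cardK] by blast
    then show False using N by auto
  next
    case False
    then have "rr 0 \<noteq> 0" using wnz unfolding p_def rr_def by (auto simp: prod_eq_iff)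
    then obtain c where "c \<in> {x. fr m x = x}" "(\<Sum>j<m. fr j c * rr j) \<noteq> 0"
      using poly_avoid[where \<alpha>=rr, OF _ m finK cardK] by blast
    then show False using N by auto
  qed
qed



declare fr_sq[simp del]

lemma char2_card:
  assumes "card (UNIV :: 'a::{field,finite} set) = 2^k" and "k \<ge> 1"
  shows "(2::'a) = 0"
proof -
  have b: "bij_betw (\<lambda>y::'a. y + 1) UNIV UNIV"
    by (rule bij_betw_byWitness[where f'="\<lambda>y. y - 1"]) auto
  have "(\<Sum>y\<in>UNIV. (y::'a) + 1) = (\<Sum>y\<in>UNIV. y)"
    using sum.reindex_bij_betw[OF b, of "\<lambda>y. y"] by simp
  then have "of_nat (card (UNIV::'a set)) = (0::'a)" by (simp add: sum.distrib)
  then have "(2::'a)^k = 0" using assms(1) by simp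
  then show ?thesis by simp
qed

lemma fermat_card:
  fixes x :: "'a::{field,finite}"
  shows "x ^ card (UNIV :: 'a set) = x"
proof (cases "x = 0")
  case True
  have "card (UNIV :: 'a set) > 0" by (simp add: card_gt_0_iff)
  then show ?thesis using True by (simp add: power_0_left)
next
  case False
  let ?U = "UNIV - {0::'a}"
  have b: "bij_betw (\<lambda>y. x*y) ?U ?U"
    by (rule bij_betw_byWitness[where f'="\<lambda>y. y / x"]) (use False in \<open>auto simp: field_simps\<close>)
  have "(\<Prod>y\<in>?U. x*y) = (\<Prod>y\<in>?U. y)"
    using prod.reindex_bij_betw[OF b, of "\<lambda>y. y"] by simp
  then have "x ^ card ?U * (\<Prod>y\<in>?U. y) = 1 * (\<Prod>y\<in>?U. y)" by (simp add: prod.distrib)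
  moreover have "(\<Prod>y\<in>?U. y) \<noteq> 0" by simp
  ultimately have h1: "x ^ card ?U = 1" by (metis mult_right_cancel)
  have ce: "card (UNIV::'a set) = Suc (card ?U)"
  proof -
    have "card ?U = card (UNIV::'a set) - 1" by (rule card_Diff_singleton) simp
    moreover have "card (UNIV :: 'a set) > 0" by (simp add: card_gt_0_iff)
    ultimately show ?thesis by simp
  qed
  have "x ^ card (UNIV::'a set) = x * x ^ card ?U" unfolding ce power_Suc ..
  then show ?thesis by (simp only: h1 mult_1_right)
qed


lemma fr_pow: "fr m (x^n) = (fr m x)^n" by (simp add: fr_def power_mult[symmetric] mult.commute)
lemma fr_inv: "fr m (inverse (x::'a::field)) = inverse (fr m x)" by (simp add: fr_def power_inverse)

lemma six_exp:
  assumes c: "(2::'a::field) = 0"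
  shows "((t::'a) + y)^6 = t^6 + t^4*y^2 + t^2*y^4 + y^6"
proof -
  have h2: "(t+y)^2 = t^2 + y^2" by (rule frob2[OF c])
  have h4: "(t+y)^4 = t^4 + y^4" using frob[OF c, of t y 2] by simp
  have "(t+y)^6 = (t+y)^4 * (t+y)^2" by (simp add: power_add[symmetric])
  also have "\<dots> = (t^4 + y^4) * (t^2 + y^2)" unfolding h2 h4 ..
  also have "\<dots> = t^6 + t^4*y^2 + t^2*y^4 + y^6" by (simp add: algebra_simps power_add[symmetric])
  finally show ?thesis .
qed

lemma S_conv1: "i < m \<Longrightarrow> S C D (int m - 2 - int i) = Sseq C D (m - 1 - i)"
  unfolding S_def by (simp add: nat_diff_distrib')
lemma S_conv2: "S C D (int i) = Sseq C D (i + 1)"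
  unfolding S_def by (simp add: nat_add_distrib)

lemma powi_conv:
  fixes D A :: "'a::field"
  assumes "D = inverse A"
  shows "D powi (1 - 2 ^ i) = A ^ (2^i - 1)"
proof -
  have h: "(1 - 2^i :: int) = - int (2^i - 1)" by (simp add: of_nat_diff)
  have "D powi (1 - 2 ^ i) = inverse (D ^ (2^i - 1))" unfolding h power_int_minus power_int_of_nat ..
  also have "\<dots> = A ^ (2^i - 1)" using assms by (simp add: power_inverse)
  finally show ?thesis .
qed


theorem theorem3p14:
  fixes m q :: nat and b \<delta> :: "'a::{field,finite}"
    and A B C D :: 'a and P Pinv :: "'a \<Rightarrow> 'a"
  assumes "m > 0" and "q = 2 ^ m" and "card (UNIV :: 'a set) = q ^ 2"
    and "b ^ q = b" and "b \<noteq> 0"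
    and "\<delta> ^ q \<noteq> \<delta>"
    and "A = b * (tr q \<delta>) ^ 2"
    and "B = b * \<delta> ^ (6 * q) + b * \<delta> ^ 6"
    and "C = (tr q \<delta>) ^ 2"
    and "D = inverse A"
    and "P = (\<lambda>x. b * (x ^ q + x + \<delta>) ^ 6 + x)"
    and "Pinv = (\<lambda>x. x + b * (\<delta> + (\<Sum>i<m.
            (D ^ (2 ^ i) * (S C D (int m - 2 - int i)) ^ (2 ^ (i + 1))
             + D powi (1 - 2 ^ i) * S C D (int i)) * (x ^ q + x + B) ^ (2 ^ i))) ^ 6)"
    and "bij P"
  shows "\<forall>c. P (Pinv c) = c \<and> Pinv (P c) = c"
proof -
  have m1: "m \<ge> 1" using assms(1) by simp
  have cardq: "card (UNIV :: 'a set) = 2 ^ (2*m)" using assms(2,3) by (simp add: power_mult[symmetric] mult.commute)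
  have c: "(2::'a) = 0" by (rule char2_card[OF cardq]) (use m1 in simp)
  have frq: "\<And>x::'a. x ^ q = fr m x" by (simp add: fr_def assms(2))
  have ferm: "\<And>x::'a. fr m (fr m x) = x"
  proof -
    fix x :: 'a
    have "fr m (fr m x) = x ^ (2^(2*m))" by (simp add: fr_def mult_2 pow2_pow2)
    also have "\<dots> = x" using fermat_card[of x] cardq by simp
    finally show "fr m (fr m x) = x" .
  qed
  have ferm2: "\<And>x::'a. fr (m+m) x = x" using ferm by (metis fr_fr)
  define T where "T = \<delta> + fr m \<delta>"
  have trq: "\<And>y::'a. tr q y = y + fr m y" by (simp add: tr_def frq)
  have TF: "fr m T = T" unfolding T_def by (simp add: fr_add[OF c] ferm2 add.commute)
  have T0: "T \<noteq> 0"
  proof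
    assume "T = 0"
    then have "fr m \<delta> = \<delta>" unfolding T_def using c2_neg[OF c] by (metis add_eq_0_iff2)
    then show False using assms(6) frq by simp
  qed
  have bF: "fr m b = b" using assms(4) frq by simp
  have Cdef: "C = T^2" using assms(9) trq T_def by simp
  have Adef: "A = b * T^2" using assms(7) trq T_def by simp
  have CF: "fr m C = C" unfolding Cdef fr_pow TF ..
  have AF: "fr m A = A" unfolding Adef fr_mult fr_pow TF bF ..
  have A0: "A \<noteq> 0" unfolding Adef using assms(5) T0 by simp
  have AD: "A * D = 1" using assms(10) A0 by simp
  have DF: "fr m D = D" unfolding assms(10) fr_inv AF ..
  have D0: "D \<noteq> 0" using AD by auto
  have TrKey: "b*(t+\<delta>)^6 + fr m (b*(t+\<delta>)^6) = A*t^4 + A*C*t^2 + B" if tF: "fr m t = t" for t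
  proof -
    let ?d = "fr m \<delta>"
    have e1: "fr m (b*(t+\<delta>)^6) = b*(t + ?d)^6" by (simp add: fr_pow fr_add[OF c] bF tF)
    have hT2: "T^2 = \<delta>^2 + ?d^2" unfolding T_def by (rule frob2[OF c])
    have hT4: "T^2 * T^2 = \<delta>^4 + ?d^4"
    proof -
      have "T^2 * T^2 = (\<delta>^2 + ?d^2)^2" unfolding hT2 by (simp add: power2_eq_square)
      also have "\<dots> = (\<delta>^2)^2 + (?d^2)^2" by (rule frob2[OF c])
      finally show ?thesis by (simp add: power_mult[symmetric] del: fr_sq)
    qed
    have Bd: "B = b * ?d^6 + b*\<delta>^6" using assms(8) frq by (simp add: power_mult mult.commute)
    have "b*(t+\<delta>)^6 + b*(t + ?d)^6 = b*T^2*t^4 + b*(T^2*T^2)*t^2 + B"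
      unfolding six_exp[OF c] Bd hT4 hT2 by (simp add: algebra_simps c2simps[OF c])
    then show ?thesis unfolding e1 Adef Cdef by (simp add: algebra_simps power2_eq_square)
  qed
  define f where "f t = A*t^4 + A*C*t^2 + t" for t
  have inj: "t = 0" if tF: "fr m t = t" and ft: "A*t^4 + A*C*t^2 + t = 0" for t
  proof -
    define x1 where "x1 = (t / T) * \<delta>"
    have tT: "fr m (t / T) = t / T" by (simp add: divide_inverse fr_inv tF TF)
    have trx1: "x1 + fr m x1 = t"
    proof -
      have fx: "fr m x1 = (t/T) * fr m \<delta>" unfolding x1_def fr_mult tT ..
      have "x1 + fr m x1 = (t/T) * (\<delta> + fr m \<delta>)" unfolding fx by (simp add: x1_def algebra_simps)
      also have "\<delta> + fr m \<delta> = T" unfolding T_def ..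
      finally show ?thesis using T0 by simp
    qed
    define s where "s = b*(t+\<delta>)^6 + b*\<delta>^6"
    have trs: "s + fr m s = t"
    proof -
      have "s + fr m s = (b*(t+\<delta>)^6 + fr m (b*(t+\<delta>)^6)) + (b*(0+\<delta>)^6 + fr m (b*(0+\<delta>)^6))"
        unfolding s_def by (simp add: fr_add[OF c] algebra_simps)
      also have "\<dots> = (A*t^4 + A*C*t^2 + B) + (A*0^4 + A*C*0^2 + B)"
        using TrKey[OF tF] TrKey[of 0] by simp
      also have "\<dots> = (A*t^4 + A*C*t^2 + t) + t + (B + B)" by (simp add: algebra_simps c2simps[OF c])
      also have "\<dots> = t" unfolding ft using c by (simp add: c2simps[OF c] flip: mult_2)
      finally show ?thesis .
    qed
    define x2 where "x2 = x1 + s"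
    have trx2: "x2 + fr m x2 = 0"
    proof -
      have "x2 + fr m x2 = (x1 + fr m x1) + (s + fr m s)" unfolding x2_def by (simp add: fr_add[OF c] algebra_simps)
      also have "\<dots> = 0" unfolding trx1 trs using c by (simp flip: mult_2)
      finally show ?thesis .
    qed
    have P1: "P x1 = b*(t+\<delta>)^6 + x1" unfolding assms(11) frq using trx1 by (simp add: add.commute)
    have "P x2 = b*(0+\<delta>)^6 + x2" unfolding assms(11) frq using trx2 by (simp add: add.commute)
    also have "\<dots> = b*(t+\<delta>)^6 + x1 + (b*\<delta>^6 + b*\<delta>^6)" unfolding x2_def s_def by (simp add: algebra_simps)
    also have "b*\<delta>^6 + b*\<delta>^6 = 0" using c by (simp flip: mult_2)
    finally have "P x2 = P x1" using P1 by simp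
    then have "x1 = x2" using assms(13) unfolding bij_def inj_def by metis
    then have "s = 0" unfolding x2_def by simp
    then show "t = 0" using trs by simp
  qed
  have cardK: "2^m \<le> card {x::'a. fr m x = x}"
  proof -
    let ?K = "{x::'a. fr m x = x}"
    let ?phi = "\<lambda>x::'a. (x + fr m x, \<delta>*x + fr m (\<delta>*x))"
    have im: "?phi ` UNIV \<subseteq> ?K \<times> ?K"
      by (auto simp: fr_add[OF c] ferm2 add.commute)
    have injphi: "inj ?phi"
    proof (rule injI)
      fix x y assume "?phi x = ?phi y"
      then have h1: "x + fr m x = y + fr m y" and h2: "\<delta>*x + fr m (\<delta>*x) = \<delta>*y + fr m (\<delta>*y)" by auto
      let ?z = "x + y"
      have z1: "fr m ?z = ?z"
      proof -
        have "?z + fr m ?z = (x + fr m x) + (y + fr m y)" by (simp add: fr_add[OF c] algebra_simps)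
        also have "\<dots> = 0" unfolding h1 using c by (simp flip: mult_2)
        finally show ?thesis using c2_neg[OF c] by (metis add_eq_0_iff2)
      qed
      have z2: "fr m (\<delta>*?z) = \<delta>*?z"
      proof -
        have "\<delta>*?z + fr m (\<delta>*?z) = (\<delta>*x + fr m (\<delta>*x)) + (\<delta>*y + fr m (\<delta>*y))"
          by (simp add: fr_add[OF c] algebra_simps del: fr_mult)
        also have "\<dots> = 0" unfolding h2 using c by (simp flip: mult_2)
        finally show ?thesis using c2_neg[OF c] by (metis add_eq_0_iff2)
      qed
      have "fr m \<delta> * ?z = \<delta> * ?z" using z2 z1 by (simp del: fr_add)
      then have "?z = 0" using assms(6) frq by auto
      then show "x = y" using c2_neg[OF c] by (metis add_eq_0_iff2)
    qed
    have "card (UNIV::'a set) \<le> card (?K \<times> ?K)"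
      by (rule card_inj_on_le[OF _ im]) (use injphi in auto)
    then have "(2^m)^2 \<le> card ?K * card ?K" using assms(2,3) by (simp add: card_cartesian_product)
    then have "(2^m)^2 \<le> (card ?K)^2" by (simp add: power2_eq_square)
    then show ?thesis by (rule power2_le_imp_le) simp
  qed
  obtain k where mk: "m = Suc k" using m1 by (cases m) auto
  define tau where "tau = Sseq C D (m+1) + D * Sseq C D (m-1) ^ 2"
  have tau_sol: "tau = sol C D 1 0 m + sol C D 0 1 (Suc m)"
  proof -
    have e1: "sol C D 1 0 m = D * Sseq C D (m-1)^2" unfolding mk r_formula[OF c AD] sol_S by simp
    have e2: "sol C D 0 1 (Suc m) = Sseq C D (m+1)" by (simp only: sol_S Suc_eq_plus1)
    show ?thesis by (simp only: tau_def e1 e2 add.commute)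
  qed
  have tau1: "tau = 1"
  proof -
    have "tau \<noteq> 0" unfolding tau_sol by (rule tau_ne0[OF c AD CF DF AF m1 cardK inj])
    moreover have "tau^2 = tau" unfolding tau_sol by (rule tau_idem[OF c AD CF DF])
    ultimately show ?thesis by (simp add: power2_eq_square)
  qed
  have sumid: "(\<Sum>i<m. (D ^ (2 ^ i) * (S C D (int m - 2 - int i)) ^ (2 ^ (i + 1))
             + D powi (1 - 2 ^ i) * S C D (int i)) * (A*t^4 + A*C*t^2 + t) ^ (2 ^ i)) = t"
    if tF: "fr m t = t" for t
  proof -
    let ?x = "\<lambda>j. fr j t"
    have trm: "(D ^ (2 ^ i) * (S C D (int m - 2 - int i)) ^ (2 ^ (i + 1))
             + D powi (1 - 2 ^ i) * S C D (int i)) * (A*t^4 + A*C*t^2 + t) ^ (2 ^ i)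
        = (fr (i+1) (Sseq C D (m-1-i)) + D * fr (i+1) A * Sseq C D (i+1))
          * (?x (i+2) + fr i C * ?x (i+1) + fr i D * ?x i)" if im: "i \<in> {..<m}" for i
    proof -
      have coef: "D ^ (2 ^ i) * (S C D (int m - 2 - int i)) ^ (2 ^ (i + 1)) + D powi (1 - 2 ^ i) * S C D (int i)
          = fr i D * fr (i+1) (Sseq C D (m-1-i)) + A^(2^i - 1) * Sseq C D (i+1)"
        using im by (simp add: S_conv1 S_conv2 powi_conv[OF assms(10)] fr_def)
      have ft: "A*t^4 + A*C*t^2 + t = A * (fr 2 t + C * fr 1 t + D * t)"
      proof -
        have "A * (fr 2 t + C * fr 1 t + D * t) = A*t^4 + A*C*t^2 + (A*D)*t" by (simp add: fr_def algebra_simps power2_eq_square)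
        then show ?thesis using AD by simp
      qed
      have pw: "(A*t^4 + A*C*t^2 + t) ^ (2 ^ i) = fr i A * (?x (i+2) + fr i C * ?x (i+1) + fr i D * ?x i)"
        unfolding ft fr_def[symmetric] by (simp add: fr_add[OF c] add.commute)
      have Ap: "A^(2^i - 1) * fr i A = D * fr (i+1) A"
      proof -
        have a1: "fr i A = A * A^(2^i - 1)" unfolding fr_def by (simp flip: power_Suc)
        have a2: "fr (i+1) A = fr i A * fr i A" by (simp add: fr_def power_add[symmetric] mult_2[symmetric] power_mult[symmetric] mult.commute)
        show ?thesis unfolding a2 using AD by (simp add: a1 algebra_simps)
      qed
      have DA: "fr i D * fr i A = 1" using AD by (metis fr_mult fr_one mult.commute)
      show ?thesis unfolding coef pw
      proof -
        let ?Y = "?x (i+2) + fr i C * ?x (i+1) + fr i D * ?x i"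
        have "(fr i D * fr (i+1) (Sseq C D (m-1-i)) + A^(2^i - 1) * Sseq C D (i+1)) * (fr i A * ?Y)
           = (fr (i+1) (Sseq C D (m-1-i)) * (fr i D * fr i A) + (A^(2^i - 1) * fr i A) * Sseq C D (i+1)) * ?Y"
          by (simp add: algebra_simps)
        also have "\<dots> = (fr (i+1) (Sseq C D (m-1-i)) + D * fr (i+1) A * Sseq C D (i+1)) * ?Y"
          unfolding DA Ap by simp
        finally show "(fr i D * fr (i+1) (Sseq C D (m-1-i)) + A^(2^i - 1) * Sseq C D (i+1)) * (fr i A * ?Y)
           = (fr (i+1) (Sseq C D (m-1-i)) + D * fr (i+1) A * Sseq C D (i+1)) * ?Y" .
      qed
    qed
    have xm: "?x m = ?x 0" using tF by simp
    have xm1: "?x (m+1) = ?x 1"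
    proof -
      have "fr (m+1) t = fr 1 (fr m t)" by simp
      then show ?thesis using tF by simp
    qed
    have "(\<Sum>i<m. (D ^ (2 ^ i) * (S C D (int m - 2 - int i)) ^ (2 ^ (i + 1))
             + D powi (1 - 2 ^ i) * S C D (int i)) * (A*t^4 + A*C*t^2 + t) ^ (2 ^ i))
        = (\<Sum>i<m. (fr (i+1) (Sseq C D (m-1-i)) + D * fr (i+1) A * Sseq C D (i+1))
          * (?x (i+2) + fr i C * ?x (i+1) + fr i D * ?x i))"
      by (rule sum.cong[OF refl trm])
    also have "\<dots> = tau * ?x 0" unfolding tau_def by (rule main_sum[OF c AD AF m1 xm xm1])
    finally show ?thesis using tau1 by simp
  qed
  have PinvP: "Pinv (P x) = x" for x
  proof -
    define t where "t = fr m x + x"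
    have tF: "fr m t = t" unfolding t_def by (simp add: fr_add[OF c] ferm2 add.commute)
    have Px: "P x = b*(t+\<delta>)^6 + x" unfolding assms(11) frq t_def ..
    have hu: "P x ^ q + P x + B = A*t^4 + A*C*t^2 + t"
    proof -
      have "P x ^ q + P x + B = (b*(t+\<delta>)^6 + fr m (b*(t+\<delta>)^6)) + (fr m x + x) + B"
        unfolding frq Px by (simp add: fr_add[OF c] algebra_simps del: fr_mult)
      also have "\<dots> = (A*t^4 + A*C*t^2 + t) + (B + B)" unfolding TrKey[OF tF] t_def[symmetric]
        by (simp add: algebra_simps)
      also have "B + B = 0" using c by (simp flip: mult_2)
      finally show ?thesis by simp
    qed
    have "Pinv (P x) = P x + b * (\<delta> + t) ^ 6"
      unfolding assms(12) hu sumid[OF tF] ..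
    also have "\<dots> = x + (b*(t+\<delta>)^6 + b*(t+\<delta>)^6)" unfolding Px by (simp add: algebra_simps)
    also have "b*(t+\<delta>)^6 + b*(t+\<delta>)^6 = 0" using c by (simp flip: mult_2)
    finally show ?thesis by simp
  qed
  show ?thesis
  proof
    fix y
    obtain x where "y = P x" using assms(13) unfolding bij_def surj_def by blast
    then show "P (Pinv y) = y \<and> Pinv (P y) = y" using PinvP by simp
  qed
qed

end
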